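(* Let $X$ be the subshift obtained from the construction described in the context, with unique shift-invariant probability measure $\mu$. Then $(X,\sigma,\mu)$ is rigid with rigidity sequence $(l_n)_{n\in\mathbb{N}}$: for every measurable set $A\subset X$, $\lim_{n\to\infty}\mu(\sigma^{l_n}A\,\triangle\,A) = 0$.
   Context: Construction. Let $l_1$ be a sufficiently large perfect square, $N_1 = 2^{\sqrt{l_1}}$, and let $\mathcal{C}_1$ be a set of $N_1$ binary words of length $l_1$. Inductively, given a set $\mathcal{C}_j$ of $N_j$ distinct words of length $l_j$ with an ordering $\mathcal{C}_j = \{u_1^{(j)},\dots,u_{N_j}^{(j)}\}$, let $P_j = \{2\}\cup\{i^2 : 2 \le i \le \lfloor\sqrt{N_j}\rfloor\}$, and let $\mathcal{C}_{j+1}$ be the set of all words $u^{(j)}_{\pi(1)}\cdots u^{(j)}_{\pi(N_j)}$ where $\pi$ ranges over permutations of $\{1,\dots,N_j\}$ fixing every element outside $P_j$; so $N_{j+1} = (\lfloor\sqrt{N_j}\rfloor)!$ and $l_{j+1} = l_jN_j$. The ordering of $\mathcal{C}_{j+1}$ is arbitrary except that its first element is $u_1^{(j)}u_2^{(j)}\cdots u_{N_j}^{(j)}$. $X\subset\{0,1\}^{\mathbb{Z}}$ is the set of bi-infinite sequences each finite subword of which is a subword of some word in $\bigcup_j\mathcal{C}_j$; it is strictly ergodic. *)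

theory Defs
  imports "HOL-Analysis.Analysis" "HOL-Probability.Probability" "HOL-Library.Sublist"
          "HOL-Combinatorics.Permutations"
begin

text \<open>Binary words are bool lists; bi-infinite sequences are functions int => bool,
  carrying the product topology (Function_Topology) and its Borel sigma algebra.\<close>

text \<open>The index set P_j = {2} union {i^2 : 2 <= i <= floor(sqrt N)}, 1-based.\<close>
definition Pset :: "nat \<Rightarrow> nat set" where
  "Pset N = {2} \<union> {i^2 | i. 2 \<le> i \<and> i^2 \<le> N}"

definition next_words :: "bool list list \<Rightarrow> bool list set" where
  "next_words us = {concat (map (\<lambda>p. us ! (\<pi> p - 1)) [1..<length us + 1]) | \<pi>.
      \<pi> permutes {1..length us} \<and> (\<forall>p \<in> {1..length us} - Pset (length us). \<pi> p = p)}"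

text \<open>U j is the ordered list of words of C_j (j >= 1; U 0 is unused).\<close>
definition valid_construction :: "(nat \<Rightarrow> bool list list) \<Rightarrow> bool" where
  "valid_construction U \<longleftrightarrow>
     (\<exists>k. distinct (U 1) \<and> length (U 1) = 2 ^ k \<and> (\<forall>w \<in> set (U 1). length w = k^2)) \<and>
     (\<forall>j\<ge>1. distinct (U (Suc j)) \<and> set (U (Suc j)) = next_words (U j) \<and>
              U (Suc j) ! 0 = concat (U j))"

definition word_len :: "(nat \<Rightarrow> bool list list) \<Rightarrow> nat \<Rightarrow> nat" where
  "word_len U j = length (U j ! 0)"

definition subshift :: "(nat \<Rightarrow> bool list list) \<Rightarrow> (int \<Rightarrow> bool) set" where
  "subshift U = {x. \<forall>i::int. \<forall>n::nat. \<exists>j\<ge>1. \<exists>w \<in> set (U j).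
       sublist (map (\<lambda>k. x (i + int k)) [0..<n]) w}"

definition shift :: "(int \<Rightarrow> bool) \<Rightarrow> (int \<Rightarrow> bool)" where
  "shift x = (\<lambda>n. x (n + 1))"

definition invariant_prob :: "(int \<Rightarrow> bool) set \<Rightarrow> (int \<Rightarrow> bool) measure \<Rightarrow> bool" where
  "invariant_prob X \<mu> \<longleftrightarrow> prob_space \<mu> \<and> space \<mu> = X \<and>
     sets \<mu> = sets (restrict_space borel X) \<and>
     (\<forall>A \<in> sets \<mu>. emeasure \<mu> (shift -` A \<inter> X) = emeasure \<mu> A)"

end

theory Submission
  imports Defs
begin

lemma concat_nth_uniform:
  assumes "\<forall>x\<in>set ws. length x = m" "q < length ws * m"
  shows "concat ws ! q = ws ! (q div m) ! (q mod m)"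
  using assms
proof (induction ws arbitrary: q)
  case Nil then show ?case by simp
next
  case (Cons a ws)
  have la: "length a = m" using Cons.prems by simp
  have mpos: "m > 0" using Cons.prems(2) by (cases m) auto
  show ?case
  proof (cases "q < m")
    case True
    then show ?thesis using la by (simp add: nth_append)
  next
    case False
    then have "q - m < length ws * m" using Cons.prems(2) by simp
    then have "concat ws ! (q - m) = ws ! ((q - m) div m) ! ((q - m) mod m)"
      using Cons by simp
    moreover have "q div m = Suc ((q - m) div m)" using False mpos
      using le_div_geq by simp
    moreover have "q mod m = (q - m) mod m" using False by (simp add: le_mod_geq)
    ultimately show ?thesis using la False by (simp add: nth_append)
  qed
qed

lemma map_ids: "map (\<lambda>p. us ! (p - 1)) [1..<length us + 1] = us"
proof -
  have "[1..<length us + 1] = map Suc [0..<length us]" by (simp add: map_Suc_upt)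
  moreover have "map ((\<lambda>p. us ! (p - 1)) \<circ> Suc) [0..<length us] = us"
    by (simp add: comp_def map_nth)
  ultimately show ?thesis by (simp del: upt_Suc)
qed

lemma nw_id: "concat us \<in> next_words us"
proof -
  have "id permutes {1..length us}" by (simp add: permutes_id)
  then show ?thesis unfolding next_words_def using map_ids[of us]
    by (intro CollectI exI[of _ id]) auto
qed

lemma nw_blocks:
  assumes "w \<in> next_words us"
  shows "\<exists>ws. w = concat ws \<and> length ws = length us \<and> set ws \<subseteq> set us \<and>
     (\<forall>b<length us. Suc b \<notin> Pset (length us) \<longrightarrow> ws ! b = us ! b)"
proof -
  obtain \<pi> where w: "w = concat (map (\<lambda>p. us ! (\<pi> p - 1)) [1..<length us + 1])"
    and pm: "\<pi> permutes {1..length us}"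
    and fx: "\<forall>p \<in> {1..length us} - Pset (length us). \<pi> p = p"
    using assms unfolding next_words_def by blast
  let ?ws = "map (\<lambda>p. us ! (\<pi> p - 1)) [1..<length us + 1]"
  have rng: "\<pi> p \<in> {1..length us}" if "p \<in> {1..length us}" for p
    using permutes_in_image[OF pm] that by blast
  have "set ?ws \<subseteq> set us"
  proof
    fix x assume "x \<in> set ?ws"
    then obtain p where "p \<in> {1..length us}" "x = us ! (\<pi> p - 1)"
      by (auto simp del: upt_Suc simp: less_Suc_eq_le)
    then show "x \<in> set us" using rng[of p] by auto
  qed
  moreover have "\<forall>b<length us. Suc b \<notin> Pset (length us) \<longrightarrow> ?ws ! b = us ! b"
    using fx by (auto simp del: upt_Suc simp: nth_upt)
  ultimately show ?thesis using w by (intro exI[of _ ?ws]) (auto simp del: upt_Suc)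
qed

lemma mod_inj_aux:
  assumes "(a + t) mod (l::nat) = (a + t') mod l" "t \<le> t'" "t' < l"
  shows "t = t'"
proof -
  obtain s where "a + t' = a + t + l * s" using mod_eq_nat2E[OF assms(1)] assms(2) by auto
  then have e: "t' = t + l * s" by simp
  show ?thesis
  proof (cases s)
    case 0 then show ?thesis using e by simp
  next
    case (Suc s') then have "t' \<ge> l" using e by simp
    then show ?thesis using assms(3) by simp
  qed
qed

lemma mod_inj:
  assumes "(a + t) mod (l::nat) = (a + t') mod l" "t < l" "t' < l"
  shows "t = t'"
proof (cases "t \<le> t'")
  case True then show ?thesis using mod_inj_aux assms by blast
next
  case False then show ?thesis using mod_inj_aux[of a t' l t] assms by simp
qed

lemma length_concat_uniform: "\<forall>x\<in>set ws. length x = m \<Longrightarrow> length (concat ws) = length ws * m"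
  by (induction ws) auto

lemma sqrt_floor_facts:
  fixes M s :: nat
  assumes s_def: "s = nat \<lfloor>sqrt (real M)\<rfloor>"
  shows "real s \<le> sqrt (real M)" "\<And>i. i^2 \<le> M \<Longrightarrow> i \<le> s" "s^2 \<le> M" "M < (s+1)^2"
proof -
  have sq0: "sqrt (real M) \<ge> 0" by simp
  show rs: "real s \<le> sqrt (real M)" unfolding s_def using sq0 by linarith
  show "i \<le> s" if "i^2 \<le> M" for i
  proof -
    have "real i ^ 2 \<le> real M" using that by (metis of_nat_le_iff of_nat_power)
    then have "real i \<le> sqrt (real M)" by (simp add: real_le_rsqrt)
    then have "int i \<le> \<lfloor>sqrt (real M)\<rfloor>" by (simp add: le_floor_iff)
    then show ?thesis unfolding s_def by simp
  qed
  have "real s ^ 2 \<le> real M" using rs by (metis of_nat_0_le_iff power_mono real_sqrt_pow2_iff sq0 real_sqrt_ge_0_iff)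
  then show "s^2 \<le> M" by (metis of_nat_le_iff of_nat_power)
  have "sqrt (real M) < real s + 1" unfolding s_def using sq0 by linarith
  moreover have "sqrt ((real s + 1)^2) = real s + 1" by simp
  ultimately have "sqrt (real M) < sqrt ((real s + 1)^2)" by simp
  then have "real M < (real s + 1)^2" by (simp only: real_sqrt_less_iff)
  then show "M < (s+1)^2" by (metis of_nat_1 of_nat_add of_nat_less_iff of_nat_power)
qed

lemma Pcard_upper:
  assumes M: "M \<ge> 1"
  shows "real (card {b. b < M \<and> Suc b \<in> Pset M}) \<le> sqrt (real M)"
proof -
  define s where "s = nat \<lfloor>sqrt (real M)\<rfloor>"
  note sf = sqrt_floor_facts[OF s_def]
  have s1: "s \<ge> 1" using sf(2)[where i=1] M by simp
  have sub: "{b. b < M \<and> Suc b \<in> Pset M} \<subseteq> insert 1 ((\<lambda>i. i^2 - 1) ` {2..s})"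
  proof
    fix b assume "b \<in> {b. b < M \<and> Suc b \<in> Pset M}"
    then have "Suc b = 2 \<or> (\<exists>i. 2 \<le> i \<and> i^2 \<le> M \<and> Suc b = i^2)" unfolding Pset_def by auto
    then show "b \<in> insert 1 ((\<lambda>i. i^2 - 1) ` {2..s})"
    proof
      assume "Suc b = 2" then show ?thesis by simp
    next
      assume "\<exists>i. 2 \<le> i \<and> i^2 \<le> M \<and> Suc b = i^2"
      then obtain i where i: "2 \<le> i" "i^2 \<le> M" "Suc b = i^2" by blast
      have "i \<le> s" using sf(2) i(2) by simp
      moreover have "b = i^2 - 1" using i(3) by simp
      ultimately show ?thesis using i(1) by auto
    qed
  qed
  have "card {b. b < M \<and> Suc b \<in> Pset M} \<le> card (insert 1 ((\<lambda>i. i^2 - 1) ` {2..s}))"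
    by (rule card_mono[OF _ sub]) simp
  also have "\<dots> \<le> Suc (card ((\<lambda>i. i^2 - 1) ` {2..s}))" by (rule card_insert_le_m1) auto
  also have "\<dots> \<le> Suc (card {2..s})" using card_image_le[of "{2..s}" "\<lambda>i. i^2 - 1"] by simp
  also have "\<dots> = s" using s1 by simp
  finally show ?thesis using sf(1) by (meson of_nat_le_iff order_trans)
qed

lemma concat_inj_uniform:
  "\<forall>x\<in>set xs. length x = m \<Longrightarrow> \<forall>x\<in>set ys. length x = m \<Longrightarrow> length xs = length ys \<Longrightarrow>
   concat xs = concat ys \<Longrightarrow> xs = ys"
proof (induction xs arbitrary: ys)
  case Nil then show ?case by simp
next
  case (Cons x xs)
  obtain y ys' where ys: "ys = y # ys'" using Cons.prems(3) by (cases ys) auto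
  have e: "x @ concat xs = y @ concat ys'" using Cons.prems(4) ys by simp
  have "length x = length y" using Cons.prems(1,2) ys by simp
  then have xy: "x = y" "concat xs = concat ys'" using e append_eq_append_conv by blast+
  have "xs = ys'" using Cons.IH[of ys'] Cons.prems ys xy(2) by simp
  then show ?case using xy ys by simp
qed

lemma fact_big: "s \<ge> 7 \<Longrightarrow> 2 * (s+1)^2 \<le> fact s"
proof (induction s rule: dec_induct)
  case base then show ?case by (simp add: fact_numeral)
next
  case (step s)
  have a: "7 * s \<le> s ^ 2" using step(1) unfolding power2_eq_square by (rule mult_right_mono) simp
  have e1: "2 * (Suc s + 1)^2 = 2 * s ^ 2 + 8 * s + 8" by (simp add: power2_eq_square algebra_simps)
  have e2: "(Suc s) * (2 * (s+1)^2) = 2 * s ^ 3 + 6 * s ^ 2 + 6 * s + 2"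
    by (simp add: power2_eq_square power3_eq_cube algebra_simps)
  have "2 * (Suc s + 1)^2 \<le> (Suc s) * (2 * (s+1)^2)"
    unfolding e1 e2 using a step(1) by linarith
  also have "\<dots> \<le> Suc s * fact s" using step(3) by (intro mult_le_mono2) simp
  also have "\<dots> = fact (Suc s)" by simp
  finally show ?case .
qed

lemma nw_card:
  assumes d: "distinct us" and u: "\<forall>x\<in>set us. length x = m" and N: "length us \<ge> 49"
  shows "card (next_words us) \<ge> 2 * length us"
proof -
  define N where "N = length us"
  define Q where "Q = Pset N \<inter> {1..N}"
  define f where "f = (\<lambda>\<pi>. concat (map (\<lambda>p. us ! (\<pi> p - 1)) [1..<N + 1]))"
  have sub: "f ` {\<pi>. \<pi> permutes Q} \<subseteq> next_words us"
  proof
    fix w assume "w \<in> f ` {\<pi>. \<pi> permutes Q}"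
    then obtain \<pi> where pq: "\<pi> permutes Q" and w: "w = f \<pi>" by auto
    have "\<pi> permutes {1..N}" using pq by (rule permutes_subset) (auto simp: Q_def)
    moreover have "\<forall>p \<in> {1..N} - Pset N. \<pi> p = p" using pq by (auto simp: Q_def permutes_not_in)
    ultimately show "w \<in> next_words us" unfolding next_words_def w f_def N_def by blast
  qed
  have fin: "finite (next_words us)"
  proof -
    have "next_words us \<subseteq> f ` {\<pi>. \<pi> permutes {1..N}}"
      unfolding next_words_def f_def N_def by blast
    moreover have "finite {\<pi>. \<pi> permutes {1..N}}" by (rule finite_permutations) simp
    ultimately show ?thesis by (meson finite_imageI finite_subset)
  qed
  have rng: "\<pi> p \<in> {1..N}" if "\<pi> permutes Q" "p \<in> {1..N}" for \<pi> p
  proof -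
    have pp: "\<pi> permutes {1..N}" using that(1) by (rule permutes_subset) (auto simp: Q_def)
    show ?thesis using permutes_in_image[OF pp] that(2) by blast
  qed
  have inj: "inj_on f {\<pi>. \<pi> permutes Q}"
  proof (rule inj_onI)
    fix \<pi> \<pi>' assume p1: "\<pi> \<in> {\<pi>. \<pi> permutes Q}" and p2: "\<pi>' \<in> {\<pi>. \<pi> permutes Q}" and e: "f \<pi> = f \<pi>'"
    let ?xs = "map (\<lambda>p. us ! (\<pi> p - 1)) [1..<N + 1]"
    let ?ys = "map (\<lambda>p. us ! (\<pi>' p - 1)) [1..<N + 1]"
    have l1: "\<forall>x\<in>set ?xs. length x = m"
    proof
      fix x assume "x \<in> set ?xs"
      then obtain p where "p \<in> {1..N}" "x = us ! (\<pi> p - 1)" by (auto simp del: upt_Suc simp: less_Suc_eq_le)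
      then show "length x = m" using rng[of \<pi> p] p1 u N_def by auto
    qed
    have l2: "\<forall>x\<in>set ?ys. length x = m"
    proof
      fix x assume "x \<in> set ?ys"
      then obtain p where "p \<in> {1..N}" "x = us ! (\<pi>' p - 1)" by (auto simp del: upt_Suc simp: less_Suc_eq_le)
      then show "length x = m" using rng[of \<pi>' p] p2 u N_def by auto
    qed
    have ce: "concat ?xs = concat ?ys" using e unfolding f_def .
    have xy: "?xs = ?ys" by (rule concat_inj_uniform[OF l1 l2 _ ce]) simp
    show "\<pi> = \<pi>'"
    proof
      fix p
      show "\<pi> p = \<pi>' p"
      proof (cases "p \<in> {1..N}")
        case True
        have idx: "p - 1 < length [1..<N+1]" using True by auto
        have nthu: "[1..<N+1] ! (p-1) = p" using True by (simp add: nth_upt del: upt_Suc)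
        have "?xs ! (p - 1) = ?ys ! (p - 1)" using xy by (simp only:)
        then have "us ! (\<pi> p - 1) = us ! (\<pi>' p - 1)" unfolding nth_map[OF idx] nthu .
        moreover have "\<pi> p \<in> {1..N}" "\<pi>' p \<in> {1..N}" using rng True p1 p2 by auto
        moreover have "\<pi> p - 1 < length us" "\<pi>' p - 1 < length us"
          using \<open>\<pi> p \<in> {1..N}\<close> \<open>\<pi>' p \<in> {1..N}\<close> N_def by auto
        ultimately have "\<pi> p - 1 = \<pi>' p - 1" using nth_eq_iff_index_eq[OF d] by blast
        then show ?thesis using \<open>\<pi> p \<in> {1..N}\<close> \<open>\<pi>' p \<in> {1..N}\<close> by (metis One_nat_def Suc_pred atLeastAtMost_iff less_eq_Suc_le)
      next
        case False
        then have "p \<notin> Q" by (simp add: Q_def)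
        then show ?thesis using p1 p2 by (simp add: permutes_not_in)
      qed
    qed
  qed
  define s where "s = nat \<lfloor>sqrt (real N)\<rfloor>"
  note sf = sqrt_floor_facts[OF s_def]
  have s7: "s \<ge> 7" using sf(2)[where i=7] N N_def by simp
  have Qsup: "insert 2 ((\<lambda>i. i^2) ` {2..s}) \<subseteq> Q"
  proof -
    have "i^2 \<le> N" if "i \<le> s" for i
    proof -
      have "i^2 \<le> s^2" using that by (simp add: power_mono)
      then show ?thesis using sf(3) by (rule order_trans)
    qed
    moreover have "1 \<le> i^2" if "2 \<le> i" for i::nat using that by (simp add: Suc_leI)
    ultimately show ?thesis unfolding Q_def Pset_def using N N_def by auto
  qed
  have "card (insert 2 ((\<lambda>i. i^2) ` {2..s})) = s"
  proof -
    have "2 \<notin> (\<lambda>i::nat. i^2) ` {2..s}"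
    proof
      assume "2 \<in> (\<lambda>i::nat. i^2) ` {2..s}"
      then obtain i::nat where "2 \<le> i" "2 = i^2" by auto
      moreover have "i^2 \<ge> 2^2" using \<open>2 \<le> i\<close> by (rule power_mono) simp
      ultimately show False by simp
    qed
    moreover have "inj_on (\<lambda>i::nat. i^2) {2..s}" by (rule inj_onI) (simp add: power2_eq_iff_nonneg)
    ultimately show ?thesis using s7 by (simp add: card_image)
  qed
  then have cQ: "card Q \<ge> s" using card_mono[OF _ Qsup] by (metis Q_def finite_Int finite_atLeastAtMost)
  have "2 * length us < 2 * (s+1)^2" using sf(4) N_def by simp
  also have "\<dots> \<le> fact s" using fact_big[OF s7] .
  also have "\<dots> \<le> fact (card Q)" using cQ by (rule fact_mono)
  also have "\<dots> = card {\<pi>. \<pi> permutes Q}" by (rule card_permutations[symmetric]) (simp_all add: Q_def)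
  also have "\<dots> = card (f ` {\<pi>. \<pi> permutes Q})" by (rule card_image[OF inj, symmetric])
  also have "\<dots> \<le> card (next_words us)" by (rule card_mono[OF fin sub])
  finally show ?thesis by simp
qed

locale cons =
  fixes U :: "nat \<Rightarrow> bool list list"
  assumes vc: "valid_construction U" and big: "length (U 1 ! 0) \<ge> 36"
begin

abbreviation "NN j \<equiv> length (U j)"
abbreviation "ll j \<equiv> word_len U j"

lemma step: "j \<ge> 1 \<Longrightarrow> distinct (U (Suc j)) \<and> set (U (Suc j)) = next_words (U j) \<and>
              U (Suc j) ! 0 = concat (U j)"
  using vc unfolding valid_construction_def by blast

lemma base1: obtains k where "distinct (U 1)" "length (U 1) = 2 ^ k" "\<forall>w \<in> set (U 1). length w = k^2" "k \<ge> 6"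
proof -
  obtain k where k: "distinct (U 1)" "length (U 1) = 2 ^ k" "\<forall>w \<in> set (U 1). length w = k^2"
    using vc unfolding valid_construction_def by blast
  have "U 1 ! 0 \<in> set (U 1)" using k(2) by simp
  then have "k^2 \<ge> 36" using big k(3) by simp
  then have "k \<ge> 6"
  proof -
    have "\<not> k < 6"
    proof
      assume "k < 6" then have "k \<le> 5" by simp
      then have "k^2 \<le> 5^2" by (rule power_mono) simp
      then have "k^2 < 36" by simp
      then show False using \<open>k^2 \<ge> 36\<close> by simp
    qed
    then show ?thesis by simp
  qed
  then show ?thesis using k that by blast
qed

lemma struct: "j \<ge> 1 \<Longrightarrow> U j \<noteq> [] \<and> (\<forall>w\<in>set (U j). length w = ll j) \<and> ll j > 0 \<and> distinct (U j)"
proof (induction j rule: dec_induct[where i=1])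
  case base
  obtain k where k: "distinct (U 1)" "length (U 1) = 2 ^ k" "\<forall>w \<in> set (U 1). length w = k^2" "k \<ge> 6"
    using base1 by blast
  have ne: "U 1 \<noteq> []" using k(2) by auto
  then have "U 1 ! 0 \<in> set (U 1)" by (simp add: nth_mem)
  then have l1: "ll 1 = k^2" using k(3) unfolding word_len_def by simp
  have "k^2 > 0" using k(4) by simp
  then show ?case using ne k(1,3) l1 by simp
next
  case (step j)
  note s = cons.step[OF cons_axioms step(1)]
  have ne: "U (Suc j) \<noteq> []"
  proof
    assume "U (Suc j) = []"
    then have "set (U (Suc j)) = {}" by simp
    then show False using s nw_id[of "U j"] by (metis empty_iff)
  qed
  have len: "length w = NN j * ll j" if "w \<in> set (U (Suc j))" for w
  proof -
    have wn: "w \<in> next_words (U j)" using that s by simp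
    from nw_blocks[OF wn] obtain ws where ws: "w = concat ws" "length ws = NN j" "set ws \<subseteq> set (U j)"
      by blast
    have "length w = sum_list (map length ws)" unfolding ws(1) by (rule length_concat)
    also have "map length ws = map (\<lambda>_. ll j) ws"
    proof (rule map_cong[OF refl])
      fix x assume "x \<in> set ws"
      then have "x \<in> set (U j)" using ws(3) by blast
      then show "length x = ll j" using step.IH by simp
    qed
    also have "sum_list (map (\<lambda>_. ll j) ws) = NN j * ll j" unfolding sum_list_triv ws(2) by simp
    finally show ?thesis .
  qed
  have "U (Suc j) ! 0 \<in> set (U (Suc j))" using ne by (simp add: nth_mem)
  then have l0: "ll (Suc j) = NN j * ll j" unfolding word_len_def[of U "Suc j"] by (rule len)
  have "NN j > 0" using step.IH by simp
  then have "ll (Suc j) > 0" using l0 step.IH by simp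
  moreover have "\<forall>w\<in>set (U (Suc j)). length w = ll (Suc j)" using len l0 by simp
  ultimately show ?case using ne s by simp
qed

lemma ll_Suc: "j \<ge> 1 \<Longrightarrow> ll (Suc j) = ll j * NN j"
proof -
  assume j: "j \<ge> 1"
  have "concat (U j) \<in> set (U (Suc j))" using step[OF j] nw_id by auto
  then have "length (concat (U j)) = ll (Suc j)" using struct[of "Suc j"] j by auto
  moreover have "length (concat (U j)) = NN j * ll j"
  proof -
    have "length (concat (U j)) = sum_list (map (\<lambda>_. ll j) (U j))"
      using struct[OF j] by (simp add: length_concat cong: map_cong)
    then show ?thesis by (simp add: sum_list_triv)
  qed
  ultimately show ?thesis by (simp only: mult.commute)
qed

lemma ll_mono0: assumes "1 \<le> j" shows "ll j \<le> ll (j + d)"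
proof (induction d)
  case 0 then show ?case by simp
next
  case (Suc d)
  have jd: "j + d \<ge> 1" using assms by simp
  have "NN (j+d) \<ge> 1" using struct[OF jd] by (simp add: Suc_leI)
  then have "ll (j+d) \<le> ll (j+d) * NN (j+d)" by simp
  then have "ll j \<le> ll (j+d) * NN (j+d)" using Suc by (rule order_trans[rotated])
  then show ?case using ll_Suc[OF jd] by simp
qed

lemma ll_mono: assumes "1 \<le> j" "j \<le> n" shows "ll j \<le> ll n"
  using ll_mono0[OF assms(1), of "n - j"] assms(2) by simp

lemma blocks_down: assumes "n \<ge> 1" "n \<le> j" shows "w \<in> set (U j) \<Longrightarrow> \<exists>ws. w = concat ws \<and> set ws \<subseteq> set (U n)"
  using assms(2) proof (induction j arbitrary: w rule: dec_induct)
  case base then show ?case by (intro exI[of _ "[w]"]) auto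
next
  case (step j)
  obtain vs where vs: "w = concat vs" "set vs \<subseteq> set (U j)"
    using nw_blocks[of w "U j"] step cons.step[OF cons_axioms, of j] assms by auto
  have "\<forall>v\<in>set vs. \<exists>ws. v = concat ws \<and> set ws \<subseteq> set (U n)" using vs step.IH by blast
  then obtain f where f: "\<forall>v\<in>set vs. v = concat (f v) \<and> set (f v) \<subseteq> set (U n)" by metis
  have "\<forall>v\<in>set xs. v = concat (f v) \<Longrightarrow> concat xs = concat (concat (map f xs))" for xs
    by (induction xs) auto
  then have "w = concat (concat (map f vs))" using vs(1) f by auto
  moreover have "set (concat (map f vs)) \<subseteq> set (U n)" using f by auto
  ultimately show ?case by blast
qed

lemma agree:
  assumes n: "n \<ge> 1" and u: "u \<in> set (U (Suc n))" and u': "u' \<in> set (U (Suc n))"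
    and r: "r < ll (Suc n)" and nb: "Suc (r div ll n) \<notin> Pset (NN n)"
  shows "u ! r = u' ! r"
proof -
  have key: "v ! r = U n ! (r div ll n) ! (r mod ll n)" if v: "v \<in> set (U (Suc n))" for v
  proof -
    obtain ws where ws: "v = concat ws" "length ws = NN n" "set ws \<subseteq> set (U n)"
       "\<forall>b<NN n. Suc b \<notin> Pset (NN n) \<longrightarrow> ws ! b = U n ! b"
      using nw_blocks[of v "U n"] v step[OF n] by auto
    have lw: "\<forall>x\<in>set ws. length x = ll n" using ws(3) struct[OF n] by auto
    have rl: "r < length ws * ll n" using r ll_Suc[OF n] ws(2) by (simp add: mult.commute)
    have "r div ll n < NN n" using rl ws(2) by (simp add: less_mult_imp_div_less)
    then show ?thesis using concat_nth_uniform[OF lw rl] ws nb by simp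
  qed
  show ?thesis using key[OF u] key[OF u'] by simp
qed

lemma window_bound:
  assumes n: "n \<ge> 1" and y: "y \<in> subshift U"
  shows "card {t. t < ll (Suc n) \<and> y (int t) \<noteq> y (int t + int (ll (Suc n)))}
         \<le> card {b. b < NN n \<and> Suc b \<in> Pset (NN n)} * ll n"
proof -
  define l where "l = ll (Suc n)"
  have n1: "Suc n \<ge> 1" by simp
  have lpos: "l > 0" using struct[OF n1] l_def by simp
  obtain j w where j: "j \<ge> 1" and w: "w \<in> set (U j)"
     and sl: "sublist (map (\<lambda>k. y (0 + int k)) [0..<2*l]) w"
    using y unfolding subshift_def by blast
  obtain ps ss where wdec: "w = ps @ map (\<lambda>k. y (int k)) [0..<2*l] @ ss"
    using sl unfolding sublist_def by auto
  have lw: "length w \<ge> 2 * l" using wdec by simp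
  have jn: "j \<ge> Suc n"
  proof (rule ccontr)
    assume "\<not> j \<ge> Suc n"
    then have "ll j \<le> l" using ll_mono[OF j, of "Suc n"] l_def by simp
    moreover have "length w = ll j" using struct[OF j] w by simp
    ultimately show False using lw lpos by simp
  qed
  obtain ws where ws: "w = concat ws" "set ws \<subseteq> set (U (Suc n))"
    using blocks_down[OF n1 jn w] by blast
  have ulen: "\<forall>x\<in>set ws. length x = l" using ws(2) struct[OF n1] l_def by auto
  have lenw: "length w = length ws * l" using ws(1) length_concat_uniform[OF ulen] by simp
  let ?a = "length ps"
  have yw: "y (int t) = w ! (?a + t)" if "t < 2 * l" for t
    using that wdec by (simp add: nth_append)
  define Bad where "Bad = {r. r < l \<and> Suc (r div ll n) \<in> Pset (NN n)}"
  have inB: "(?a + t) mod l \<in> Bad" if t: "t < l" "y (int t) \<noteq> y (int t + int l)" for t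
  proof (rule ccontr)
    assume nb: "(?a + t) mod l \<notin> Bad"
    let ?q = "?a + t"
    let ?r = "?q mod l"
    have r: "?r < l" using lpos by simp
    have nP: "Suc (?r div ll n) \<notin> Pset (NN n)" using nb r Bad_def by simp
    have ql: "?q + l < length w" using wdec t(1) by simp
    have q1: "?q < length ws * l" using ql lenw by simp
    have q2: "?q + l < length ws * l" using ql lenw by simp
    have d2: "(?q + l) div l = Suc (?q div l)" using lpos by simp
    have m2: "(?q + l) mod l = ?r" by simp
    have b1: "?q div l < length ws" using q1 by (simp add: less_mult_imp_div_less)
    have b2: "Suc (?q div l) < length ws" using q2 d2 by (metis less_mult_imp_div_less)
    have e1: "w ! ?q = ws ! (?q div l) ! ?r" using concat_nth_uniform[OF ulen q1] ws(1) by simp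
    have e2: "w ! (?q + l) = ws ! Suc (?q div l) ! ?r"
      using concat_nth_uniform[OF ulen q2] ws(1) d2 m2 by simp
    have i1: "ws ! (?q div l) \<in> set (U (Suc n))" using b1 ws(2) by (meson nth_mem subsetD)
    have i2: "ws ! Suc (?q div l) \<in> set (U (Suc n))" using b2 ws(2) by (meson nth_mem subsetD)
    have "ws ! (?q div l) ! ?r = ws ! Suc (?q div l) ! ?r"
      using agree[OF n i1 i2 _ nP] r l_def by simp
    then have "w ! ?q = w ! (?q + l)" using e1 e2 by simp
    moreover have "y (int t) = w ! ?q" using yw t(1) by simp
    moreover have "y (int t + int l) = w ! (?q + l)"
      using yw[of "t + l"] t(1) by (simp add: add.assoc)
    ultimately show False using t(2) by simp
  qed
  let ?T = "{t. t < l \<and> y (int t) \<noteq> y (int t + int l)}"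
  have inj: "inj_on (\<lambda>t. (?a + t) mod l) ?T"
  proof (rule inj_onI)
    fix t t' assume "t \<in> ?T" "t' \<in> ?T" "(?a + t) mod l = (?a + t') mod l"
    then show "t = t'" using mod_inj[of ?a t l t'] by simp
  qed
  have im: "(\<lambda>t. (?a + t) mod l) ` ?T \<subseteq> Bad" using inB by blast
  have fB: "finite Bad" unfolding Bad_def by simp
  have "card ?T \<le> card Bad"
    by (rule card_inj_on_le[OF inj im fB])
  also have "card Bad \<le> card {b. b < NN n \<and> Suc b \<in> Pset (NN n)} * ll n"
  proof -
    let ?B = "{b. b < NN n \<and> Suc b \<in> Pset (NN n)}"
    have "Bad \<subseteq> (\<lambda>(b, s). b * ll n + s) ` (?B \<times> {..<ll n})"
    proof
      fix r assume "r \<in> Bad"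
      then have r: "r < l" "Suc (r div ll n) \<in> Pset (NN n)" using Bad_def by auto
      have lnp: "ll n > 0" using struct[OF n] by simp
      have "r < ll n * NN n" using r(1) l_def ll_Suc[OF n] by simp
      then have "r div ll n < NN n" using less_mult_imp_div_less[of r "NN n" "ll n"] by (simp add: mult.commute)
      moreover have "r = (r div ll n) * ll n + r mod ll n" by (rule div_mult_mod_eq[symmetric])
      moreover have "r mod ll n < ll n" using lnp by simp
      ultimately show "r \<in> (\<lambda>(b, s). b * ll n + s) ` (?B \<times> {..<ll n})"
        using r(2) by (intro image_eqI[of _ _ "(r div ll n, r mod ll n)"]) auto
    qed
    then have "card Bad \<le> card (?B \<times> {..<ll n})"
      by (rule surj_card_le[rotated]) simp
    also have "\<dots> = card ?B * ll n" by (simp add: card_cartesian_product)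
    finally show ?thesis .
  qed
  finally show ?thesis using l_def by simp
qed


lemma NN_grow: "j \<ge> 1 \<Longrightarrow> NN j \<ge> 49 + j"
proof (induction j rule: dec_induct)
  case base
  obtain k where k: "distinct (U 1)" "length (U 1) = 2 ^ k" "\<forall>w \<in> set (U 1). length w = k^2" "k \<ge> 6"
    using base1 by blast
  have "(2::nat) ^ 6 \<le> 2 ^ k" using k(4) by (rule power_increasing) simp
  then show ?case using k(2) by simp
next
  case (step j)
  have j: "j \<ge> 1" using step(1) .
  have d: "distinct (U (Suc j))" and se: "set (U (Suc j)) = next_words (U j)"
    using cons.step[OF cons_axioms j] by blast+
  have "NN (Suc j) = card (set (U (Suc j)))" by (rule distinct_card[symmetric, OF d])
  also have "\<dots> = card (next_words (U j))" by (simp only: se)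
  finally have e: "NN (Suc j) = card (next_words (U j))" .
  have "card (next_words (U j)) \<ge> 2 * NN j"
    by (rule nw_card[of "U j" "ll j"]) (use struct[OF j] step(3) in auto)
  then show ?case using e step(3) by simp
qed

lemma ratio_bound:
  assumes n: "n \<ge> 1"
  shows "real (card {b. b < NN n \<and> Suc b \<in> Pset (NN n)} * ll n) / real (ll (Suc n)) \<le> 1 / sqrt (real (NN n))"
proof -
  have lp: "ll n > 0" using struct[OF n] by simp
  have Np: "NN n \<ge> 1" using NN_grow[OF n] by linarith
  then have Npr: "real (NN n) > 0" by linarith
  let ?c = "card {b. b < NN n \<and> Suc b \<in> Pset (NN n)}"
  have "real (?c * ll n) / real (ll (Suc n)) = real ?c / real (NN n)"
    using ll_Suc[OF n] lp by (simp add: field_simps)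
  also have "\<dots> \<le> sqrt (real (NN n)) / real (NN n)"
    using Pcard_upper[OF Np] Npr by (simp add: divide_right_mono)
  also have "\<dots> = 1 / sqrt (real (NN n))"
  proof -
    have "sqrt (real (NN n)) * sqrt (real (NN n)) = real (NN n)" using Npr by simp
    then show ?thesis using Npr by (simp add: field_simps)
  qed
  finally show ?thesis .
qed

end


instance bool :: second_countable_topology
proof
  show "\<exists>B::bool set set. countable B \<and> open = generate_topology B"
  proof (intro exI conjI)
    show "countable (UNIV :: bool set set)" by simp
    show "open = generate_topology (UNIV :: bool set set)"
    proof (rule ext)
      fix S :: "bool set"
      have "open S" by (rule discrete_topology_class.open_discrete)
      moreover have "generate_topology UNIV S" by (rule generate_topology.Basis) simp
      ultimately show "open S = generate_topology UNIV S" by simp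
    qed
  qed
qed

definition sh :: "int \<Rightarrow> (int \<Rightarrow> bool) \<Rightarrow> (int \<Rightarrow> bool)" where
  "sh m x = (\<lambda>i. x (i + m))"

lemma sh_comp: "sh a (sh b x) = sh (a + b) x"
  unfolding sh_def by (rule ext) (simp add: algebra_simps)

lemma sh_0[simp]: "sh 0 x = x" unfolding sh_def by simp

lemma shift_pow: "(shift ^^ l) = sh (int l)"
proof (induction l)
  case 0 then show ?case by (auto simp: sh_def fun_eq_iff)
next
  case (Suc l)
  have "shift ^^ Suc l = shift \<circ> (shift ^^ l)" by simp
  also have "\<dots> = shift \<circ> sh (int l)" by (simp only: Suc)
  also have "\<dots> = sh (int (Suc l))" by (rule ext) (simp add: shift_def sh_def algebra_simps)
  finally show ?case .
qed

lemma sh_X: "x \<in> subshift U \<Longrightarrow> sh m x \<in> subshift U"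
proof -
  assume x: "x \<in> subshift U"
  show "sh m x \<in> subshift U" unfolding subshift_def
  proof (intro CollectI allI)
    fix i :: int and n :: nat
    have eq: "map (\<lambda>k. sh m x (i + int k)) [0..<n] = map (\<lambda>k. x ((i + m) + int k)) [0..<n]"
      by (simp add: sh_def algebra_simps)
    have ex: "\<exists>j\<ge>1. \<exists>w\<in>set (U j). sublist (map (\<lambda>k. x ((i + m) + int k)) [0..<n]) w"
      using x unfolding subshift_def by blast
    show "\<exists>j\<ge>1. \<exists>w\<in>set (U j). sublist (map (\<lambda>k. sh m x (i + int k)) [0..<n]) w"
      unfolding eq by (rule ex)
  qed
qed

lemma sh_image: "A \<subseteq> subshift U \<Longrightarrow> sh m ` A = sh (- m) -` A \<inter> subshift U"
proof
  assume A: "A \<subseteq> subshift U"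
  show "sh m ` A \<subseteq> sh (- m) -` A \<inter> subshift U"
  proof
    fix y assume "y \<in> sh m ` A"
    then obtain x where x: "x \<in> A" "y = sh m x" by auto
    then have "sh (-m) y = x" by (simp add: sh_comp)
    then have "sh (-m) y \<in> A" using x(1) by simp
    moreover have "y \<in> subshift U" unfolding x(2) by (rule sh_X) (use x(1) A in blast)
    ultimately show "y \<in> sh (- m) -` A \<inter> subshift U" by simp
  qed
  show "sh (- m) -` A \<inter> subshift U \<subseteq> sh m ` A"
  proof
    fix y assume y: "y \<in> sh (- m) -` A \<inter> subshift U"
    have "y = sh m (sh (-m) y)" by (simp add: sh_comp)
    moreover have "sh (-m) y \<in> A" using y by simp
    ultimately show "y \<in> sh m ` A" by (rule image_eqI)
  qed
qed

lemma sh_cont: "continuous_on UNIV (sh m)"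
  unfolding sh_def by (intro continuous_on_coordinatewise_then_product) simp

lemma sh_borel: "B \<in> sets borel \<Longrightarrow> sh m -` B \<in> sets borel"
  using measurable_sets[OF borel_measurable_continuous_onI[OF sh_cont]] by simp

lemma coord_borel: "{f::int\<Rightarrow>bool. f i \<in> C} \<in> sets borel"
proof -
  have "(\<lambda>f::int\<Rightarrow>bool. f i) \<in> borel_measurable borel"
    by (rule borel_measurable_continuous_onI) simp
  then have "(\<lambda>f::int\<Rightarrow>bool. f i) -` C \<inter> space borel \<in> sets borel"
    by (rule measurable_sets) (simp add: discrete_topology_class.open_discrete borel_open)
  then show ?thesis by (simp add: vimage_def)
qed

lemma borel_gen: "sets (borel :: (int \<Rightarrow> bool) measure) =
   sigma_sets UNIV {{f. f i \<in> C} | i C. True}"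
proof -
  have "sets (borel :: (int \<Rightarrow> bool) measure) = sets (Pi\<^sub>M UNIV (\<lambda>i::int. borel::bool measure))"
    by (rule sets_PiM_equal_borel[symmetric])
  also have "\<dots> = sigma_sets UNIV {{f. f i \<in> C} | i C. True}"
  proof -
    have all: "(A::bool set) \<in> sets borel" for A by (simp add: borel_open discrete_topology_class.open_discrete)
    have "{{f::int\<Rightarrow>bool. f i \<in> A} |i A. A \<in> sets borel} = {{f. f i \<in> C} | i C. True}"
      using all by blast
    then show ?thesis unfolding sets_PiM_single by simp
  qed
  finally show ?thesis .
qed


locale meas =
  fixes U :: "nat \<Rightarrow> bool list list" and \<mu> :: "(int \<Rightarrow> bool) measure"
  assumes inv: "invariant_prob (subshift U) \<mu>"
begin

abbreviation "X \<equiv> subshift U"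

lemma ps: "prob_space \<mu>" using inv unfolding invariant_prob_def by blast
lemma sp: "space \<mu> = X" using inv unfolding invariant_prob_def by blast
lemma sts: "sets \<mu> = sets (restrict_space borel X)" using inv unfolding invariant_prob_def by blast
lemma inv1: "A \<in> sets \<mu> \<Longrightarrow> emeasure \<mu> (shift -` A \<inter> X) = emeasure \<mu> A"
  using inv unfolding invariant_prob_def by blast

sublocale prob_space \<mu> by (rule ps)

lemma sets_char: "A \<in> sets \<mu> \<longleftrightarrow> (\<exists>B \<in> sets borel. A = X \<inter> B)"
  unfolding sts sets_restrict_space by auto

lemma subX: "A \<in> sets \<mu> \<Longrightarrow> A \<subseteq> X"
  using sets.sets_into_space sp by blast

lemma pre_meas: "A \<in> sets \<mu> \<Longrightarrow> sh m -` A \<inter> X \<in> sets \<mu>"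
proof -
  assume "A \<in> sets \<mu>"
  then obtain B where B: "B \<in> sets borel" "A = X \<inter> B" using sets_char by blast
  have "sh m -` A \<inter> X = X \<inter> sh m -` B" using B(2) sh_X by blast
  moreover have "sh m -` B \<in> sets borel" by (rule sh_borel[OF B(1)])
  ultimately show ?thesis using sets_char by blast
qed

lemma pre_comp: "sh (a + b) -` A \<inter> X = sh a -` (sh b -` A \<inter> X) \<inter> X"
proof -
  have "sh b (sh a x) = sh (a + b) x" for x by (simp add: sh_comp add.commute)
  then show ?thesis using sh_X by auto
qed

lemma shift_sh1: "shift = sh 1" unfolding shift_def sh_def by (rule ext) simp

lemma inv_pos1: "A \<in> sets \<mu> \<Longrightarrow> emeasure \<mu> (sh 1 -` A \<inter> X) = emeasure \<mu> A"
  using inv1 shift_sh1 by simp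

lemma inv_neg1: "A \<in> sets \<mu> \<Longrightarrow> emeasure \<mu> (sh (-1) -` A \<inter> X) = emeasure \<mu> A"
proof -
  assume A: "A \<in> sets \<mu>"
  let ?E = "sh (-1) -` A \<inter> X"
  have E: "?E \<in> sets \<mu>" by (rule pre_meas[OF A])
  have "sh 1 -` ?E \<inter> X = sh (1 + -1) -` A \<inter> X" by (rule pre_comp[symmetric])
  also have "\<dots> = A" using subX[OF A] by (auto simp: vimage_def)
  finally have "emeasure \<mu> A = emeasure \<mu> (sh 1 -` ?E \<inter> X)" by simp
  also have "\<dots> = emeasure \<mu> ?E" by (rule inv_pos1[OF E])
  finally show ?thesis by simp
qed

lemma inv_nat: "\<forall>A \<in> sets \<mu>. emeasure \<mu> (sh (int n) -` A \<inter> X) = emeasure \<mu> A \<and>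
   emeasure \<mu> (sh (- int n) -` A \<inter> X) = emeasure \<mu> A"
proof (induction n)
  case 0
  have "A \<inter> X = A" if "A \<in> sets \<mu>" for A using subX[OF that] by auto
  then show ?case by (simp add: vimage_def)
next
  case (Suc n)
  show ?case
  proof
    fix A assume A: "A \<in> sets \<mu>"
    have "sh (int (Suc n)) -` A \<inter> X = sh 1 -` (sh (int n) -` A \<inter> X) \<inter> X"
      using pre_comp[of 1 "int n" A] by (simp add: add.commute)
    then have e1: "emeasure \<mu> (sh (int (Suc n)) -` A \<inter> X) = emeasure \<mu> A"
      using inv_pos1[OF pre_meas[OF A]] Suc A by simp
    have "sh (- int (Suc n)) -` A \<inter> X = sh (-1) -` (sh (- int n) -` A \<inter> X) \<inter> X"
      using pre_comp[of "-1" "- int n" A] by (simp add: add.commute)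
    then have e2: "emeasure \<mu> (sh (- int (Suc n)) -` A \<inter> X) = emeasure \<mu> A"
      using inv_neg1[OF pre_meas[OF A]] Suc A by simp
    show "emeasure \<mu> (sh (int (Suc n)) -` A \<inter> X) = emeasure \<mu> A \<and>
      emeasure \<mu> (sh (- int (Suc n)) -` A \<inter> X) = emeasure \<mu> A" using e1 e2 by simp
  qed
qed

lemma inv_emeasure: "A \<in> sets \<mu> \<Longrightarrow> emeasure \<mu> (sh m -` A \<inter> X) = emeasure \<mu> A"
proof (cases "m \<ge> 0")
  case True
  then have "m = int (nat m)" by simp
  then show "A \<in> sets \<mu> \<Longrightarrow> ?thesis" using inv_nat[of "nat m"] by metis
next
  case False
  then have "m = - int (nat (- m))" by simp
  then show "A \<in> sets \<mu> \<Longrightarrow> ?thesis" using inv_nat[of "nat (-m)"] by metis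
qed

lemma inv_measure: "A \<in> sets \<mu> \<Longrightarrow> measure \<mu> (sh m -` A \<inter> X) = measure \<mu> A"
  unfolding measure_def using inv_emeasure by simp


definition S :: "int \<Rightarrow> (int \<Rightarrow> bool) set \<Rightarrow> (int \<Rightarrow> bool) set" where
  "S m A = sh (- m) -` A \<inter> X"

definition D :: "int \<Rightarrow> (int \<Rightarrow> bool) set \<Rightarrow> (int \<Rightarrow> bool) set" where
  "D m A = (S m A - A) \<union> (A - S m A)"

definition rigid :: "(nat \<Rightarrow> int) \<Rightarrow> (int \<Rightarrow> bool) set \<Rightarrow> bool" where
  "rigid ms A \<longleftrightarrow> (\<lambda>n. measure \<mu> (D (ms n) A)) \<longlonglongrightarrow> 0"

definition Bad0 :: "int \<Rightarrow> (int \<Rightarrow> bool) set" where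
  "Bad0 m = X \<inter> {y. y 0 \<noteq> y m}"

lemma S_meas: "A \<in> sets \<mu> \<Longrightarrow> S m A \<in> sets \<mu>"
  unfolding S_def by (rule pre_meas)

lemma S_measure: "A \<in> sets \<mu> \<Longrightarrow> measure \<mu> (S m A) = measure \<mu> A"
  unfolding S_def by (rule inv_measure)

lemma D_meas: "A \<in> sets \<mu> \<Longrightarrow> D m A \<in> sets \<mu>"
  unfolding D_def using S_meas by blast

lemma Bad0_meas: "Bad0 m \<in> sets \<mu>"
proof -
  have "{y::int\<Rightarrow>bool. y 0 \<noteq> y m} =
     ({f. f 0 \<in> {True}} \<inter> {f. f m \<in> {False}}) \<union> ({f. f 0 \<in> {False}} \<inter> {f. f m \<in> {True}})"
    by auto
  moreover have "({f::int\<Rightarrow>bool. f 0 \<in> {True}} \<inter> {f. f m \<in> {False}}) \<union> ({f. f 0 \<in> {False}} \<inter> {f. f m \<in> {True}}) \<in> sets borel"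
    by (intro sets.Un sets.Int coord_borel)
  ultimately have "{y::int\<Rightarrow>bool. y 0 \<noteq> y m} \<in> sets borel" by simp
  then show ?thesis unfolding Bad0_def using sets_char by blast
qed

lemma D_compl: "A \<in> sets \<mu> \<Longrightarrow> D m (X - A) = D m A"
proof -
  assume A: "A \<in> sets \<mu>"
  have "S m (X - A) = X - S m A" unfolding S_def using sh_X by auto
  moreover have "S m A \<subseteq> X" unfolding S_def by auto
  ultimately show ?thesis unfolding D_def using subX[OF A] by blast
qed

lemma rigid_union:
  fixes A :: "nat \<Rightarrow> (int \<Rightarrow> bool) set"
  assumes A: "\<And>k. A k \<in> sets \<mu>" and R: "\<And>k. rigid ms (A k)"
  shows "rigid ms (\<Union>k. A k)"
  unfolding rigid_def
proof (rule tendstoI)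
  fix e :: real assume e: "e > 0"
  let ?A = "\<Union>k. A k"
  define F where "F K = (\<Union>k<K. A k)" for K
  have Fm: "F K \<in> sets \<mu>" for K unfolding F_def using A by blast
  have Am: "?A \<in> sets \<mu>" using A by blast
  have "(\<lambda>K. measure \<mu> (F K)) \<longlonglongrightarrow> measure \<mu> (\<Union>K. F K)"
  proof (rule finite_Lim_measure_incseq)
    show "range F \<subseteq> sets \<mu>" using Fm by blast
    show "incseq F" unfolding incseq_def F_def by (auto intro: less_le_trans)
  qed
  moreover have "(\<Union>K. F K) = ?A" unfolding F_def by blast
  ultimately have lim: "(\<lambda>K. measure \<mu> (F K)) \<longlonglongrightarrow> measure \<mu> ?A" by simp
  have "e / 4 > 0" using e by simp
  from order_tendstoD(1)[OF lim, of "measure \<mu> ?A - e / 4"] e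
  obtain K where K: "measure \<mu> (F K) > measure \<mu> ?A - e / 4"
    by (auto dest: eventually_happens simp: eventually_sequentially)
  have FA: "F K \<subseteq> ?A" unfolding F_def by blast
  have dif: "measure \<mu> (?A - F K) < e / 4"
    using K finite_measure_Diff[OF Am Fm FA] by simp
  have lim0: "(\<lambda>n. \<Sum>k<K. measure \<mu> (D (ms n) (A k))) \<longlonglongrightarrow> 0"
    by (rule tendsto_null_sum) (use R in \<open>simp add: rigid_def\<close>)
  have ev: "\<forall>\<^sub>F n in sequentially. (\<Sum>k<K. measure \<mu> (D (ms n) (A k))) < e / 2"
    by (rule order_tendstoD(2)[OF lim0]) (use e in simp)
  show "\<forall>\<^sub>F n in sequentially. dist (measure \<mu> (D (ms n) ?A)) 0 < e"
  proof (rule eventually_mono[OF ev])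
    fix n assume sn: "(\<Sum>k<K. measure \<mu> (D (ms n) (A k))) < e / 2"
    let ?m = "ms n"
    have sub: "D ?m ?A \<subseteq> (\<Union>k<K. D ?m (A k)) \<union> ((?A - F K) \<union> S ?m (?A - F K))"
      unfolding D_def S_def F_def by blast
    have m1: "(\<Union>k<K. D ?m (A k)) \<in> sets \<mu>" using D_meas A by blast
    have m2: "?A - F K \<in> sets \<mu>" using Am Fm by blast
    have m3: "S ?m (?A - F K) \<in> sets \<mu>" using S_meas m2 by blast
    have "measure \<mu> (D ?m ?A) \<le> measure \<mu> ((\<Union>k<K. D ?m (A k)) \<union> ((?A - F K) \<union> S ?m (?A - F K)))"
      by (rule finite_measure_mono[OF sub]) (use m1 m2 m3 in blast)
    also have "\<dots> \<le> measure \<mu> (\<Union>k<K. D ?m (A k)) + measure \<mu> ((?A - F K) \<union> S ?m (?A - F K))"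
      by (rule measure_Un_le) (use m1 m2 m3 in blast)+
    also have "\<dots> \<le> (\<Sum>k<K. measure \<mu> (D ?m (A k))) + (measure \<mu> (?A - F K) + measure \<mu> (S ?m (?A - F K)))"
      by (intro add_mono measure_UNION_le measure_Un_le) (use D_meas A m2 m3 in auto)
    also have "\<dots> = (\<Sum>k<K. measure \<mu> (D ?m (A k))) + 2 * measure \<mu> (?A - F K)"
      using S_measure[OF m2] by simp
    also have "\<dots> < e" using sn dif by simp
    finally have "measure \<mu> (D ?m ?A) < e" .
    then show "dist (measure \<mu> (D ?m ?A)) 0 < e" by simp
  qed
qed

lemma rigid_gen:
  assumes lim: "(\<lambda>n. measure \<mu> (Bad0 (ms n))) \<longlonglongrightarrow> 0"
  shows "rigid ms (X \<inter> {f. f i \<in> C})"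
  unfolding rigid_def
proof (rule tendsto_sandwich[OF _ _ tendsto_const lim])
  show "\<forall>\<^sub>F n in sequentially. 0 \<le> measure \<mu> (D (ms n) (X \<inter> {f. f i \<in> C}))" by simp
  show "\<forall>\<^sub>F n in sequentially. measure \<mu> (D (ms n) (X \<inter> {f. f i \<in> C})) \<le> measure \<mu> (Bad0 (ms n))"
  proof (rule always_eventually, rule allI)
    fix n
    let ?m = "ms n"
    have "D ?m (X \<inter> {f. f i \<in> C}) \<subseteq> sh (i - ?m) -` Bad0 ?m \<inter> X"
    proof
      fix y assume y: "y \<in> D ?m (X \<inter> {f. f i \<in> C})"
      then have yX: "y \<in> X" unfolding D_def S_def by blast
      have mem: "y \<in> S ?m (X \<inter> {f. f i \<in> C}) \<longleftrightarrow> y (i - ?m) \<in> C"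
        using yX sh_X[where x=y and m="- ?m"] by (auto simp: S_def sh_def)
      have "(y (i - ?m) \<in> C) \<noteq> (y i \<in> C)" using y yX mem unfolding D_def by blast
      then have "y (i - ?m) \<noteq> y i" by (rule contrapos_nn) simp
      then have "sh (i - ?m) y 0 \<noteq> sh (i - ?m) y ?m" by (simp add: sh_def)
      then show "y \<in> sh (i - ?m) -` Bad0 ?m \<inter> X" using yX sh_X unfolding Bad0_def by blast
    qed
    then have "measure \<mu> (D ?m (X \<inter> {f. f i \<in> C})) \<le> measure \<mu> (sh (i - ?m) -` Bad0 ?m \<inter> X)"
      by (rule finite_measure_mono) (rule pre_meas[OF Bad0_meas])
    also have "\<dots> = measure \<mu> (Bad0 ?m)" by (rule inv_measure[OF Bad0_meas])
    finally show "measure \<mu> (D ?m (X \<inter> {f. f i \<in> C})) \<le> measure \<mu> (Bad0 ?m)" .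
  qed
qed

lemma all_rigid:
  assumes lim: "(\<lambda>n. measure \<mu> (Bad0 (ms n))) \<longlonglongrightarrow> 0"
  shows "A \<in> sets \<mu> \<Longrightarrow> rigid ms A"
proof -
  have "B \<in> sigma_sets UNIV {{f. f i \<in> C} | i C. True} \<Longrightarrow> rigid ms (X \<inter> B)" for B
  proof (induction rule: sigma_sets.induct)
    case (Basic a)
    then obtain i C where "a = {f. f i \<in> C}" by blast
    then show ?case using rigid_gen[OF lim] by simp
  next
    case Empty
    have "D m {} = {}" for m unfolding D_def S_def by simp
    then show ?case unfolding rigid_def by simp
  next
    case (Compl a)
    have am: "X \<inter> a \<in> sets \<mu>" using Compl(1) borel_gen sets_char by blast
    have "X \<inter> (UNIV - a) = X - (X \<inter> a)" by blast
    then show ?case using Compl(2) D_compl[OF am] unfolding rigid_def by simp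
  next
    case (Union a)
    have am: "X \<inter> a k \<in> sets \<mu>" for k using Union(1) borel_gen sets_char by blast
    have "X \<inter> \<Union> (range a) = (\<Union>k. X \<inter> a k)" by blast
    then show ?case using rigid_union[OF am Union(2)] by simp
  qed
  moreover assume "A \<in> sets \<mu>"
  then obtain B where "B \<in> sets borel" "A = X \<inter> B" using sets_char by blast
  ultimately show ?thesis using borel_gen by blast
qed


lemma average_bound:
  assumes l: "l > 0" and cb: "\<And>y. y \<in> X \<Longrightarrow> card {t. t < l \<and> y (int t) \<noteq> y (int t + int l)} \<le> c"
  shows "measure \<mu> (Bad0 (int l)) \<le> real c / real l"
proof -
  define B where "B t = sh (int t) -` Bad0 (int l) \<inter> X" for t
  have Bm: "B t \<in> sets \<mu>" for t unfolding B_def by (rule pre_meas[OF Bad0_meas])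
  have Bmeas: "measure \<mu> (B t) = measure \<mu> (Bad0 (int l))" for t
    unfolding B_def by (rule inv_measure[OF Bad0_meas])
  have memB: "y \<in> B t \<longleftrightarrow> y \<in> X \<and> y (int t) \<noteq> y (int t + int l)" for y t
  proof -
    have "y \<in> X \<Longrightarrow> sh (int t) y \<in> X" by (rule sh_X)
    then show ?thesis unfolding B_def Bad0_def by (auto simp: sh_def add.commute)
  qed
  have int1: "integrable \<mu> (indicator (B t) :: _ \<Rightarrow> real)" for t
    by (rule integrable_real_indicator[OF Bm]) (simp add: less_top[symmetric])
  have "real l * measure \<mu> (Bad0 (int l)) = (\<Sum>t<l. measure \<mu> (B t))"
    using Bmeas by simp
  also have "\<dots> = (\<Sum>t<l. integral\<^sup>L \<mu> (indicator (B t)))"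
  proof (rule sum.cong[OF refl])
    fix t
    have "B t \<inter> space \<mu> = B t" using subX[OF Bm] sp by blast
    then show "measure \<mu> (B t) = integral\<^sup>L \<mu> (indicator (B t))" by simp
  qed
  also have "\<dots> = integral\<^sup>L \<mu> (\<lambda>y. \<Sum>t<l. indicator (B t) y)"
    using Bochner_Integration.integral_sum[where I="{..<l}" and M=\<mu> and f="\<lambda>t. indicator (B t) :: _ \<Rightarrow> real"] int1 by simp
  also have "\<dots> \<le> integral\<^sup>L \<mu> (\<lambda>y. real c)"
  proof (rule integral_mono)
    show "integrable \<mu> (\<lambda>y. \<Sum>t<l. indicator (B t) y :: real)" using int1 by simp
    show "integrable \<mu> (\<lambda>y. real c)" by simp
    fix y assume "y \<in> space \<mu>"
    then have yX: "y \<in> X" using sp by simp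
    have "(\<Sum>t<l. indicator (B t) y :: real) = real (card {t \<in> {..<l}. y \<in> B t})"
      by (simp add: indicator_def sum.If_cases Int_def)
    also have "{t \<in> {..<l}. y \<in> B t} = {t. t < l \<and> y (int t) \<noteq> y (int t + int l)}"
      using memB yX by auto
    also have "real (card \<dots>) \<le> real c" using cb[OF yX] by simp
    finally show "(\<Sum>t<l. indicator (B t) y :: real) \<le> real c" .
  qed
  also have "\<dots> = real c" by (simp add: prob_space)
  finally show ?thesis using l by (simp add: field_simps)
qed

end


theorem mainTheorem10:
  shows "\<exists>L::nat. \<forall>U \<mu>. valid_construction U \<and> length (U 1 ! 0) \<ge> L \<and>
           invariant_prob (subshift U) \<mu> \<longrightarrow>
           (\<forall>A \<in> sets \<mu>. (\<lambda>n. measure \<mu> (((shift ^^ word_len U n) ` A - A) \<union>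
                                             (A - (shift ^^ word_len U n) ` A)))
                          \<longlonglongrightarrow> 0)"
proof (intro exI[of _ 36] allI impI)
  fix U :: "nat \<Rightarrow> bool list list" and \<mu> :: "(int \<Rightarrow> bool) measure"
  assume H: "valid_construction U \<and> length (U 1 ! 0) \<ge> 36 \<and> invariant_prob (subshift U) \<mu>"
  interpret C: cons U using H by unfold_locales auto
  interpret M: meas U \<mu> using H by unfold_locales auto
  define ms where "ms n = int (word_len U n)" for n
  define g where "g n = sqrt (inverse (real (Suc n)))" for n
  have glim: "g \<longlonglongrightarrow> 0"
    unfolding g_def using tendsto_real_sqrt[OF LIMSEQ_inverse_real_of_nat] by simp
  have lim: "(\<lambda>n. measure \<mu> (M.Bad0 (ms n))) \<longlonglongrightarrow> 0"
  proof (rule tendsto_sandwich[OF _ _ tendsto_const glim])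
    show "\<forall>\<^sub>F n in sequentially. 0 \<le> measure \<mu> (M.Bad0 (ms n))" by simp
    have "measure \<mu> (M.Bad0 (ms n)) \<le> g n" if n2: "n \<ge> 2" for n
    proof -
      obtain m where nm: "n = Suc m" using n2 by (cases n) auto
      have m1: "m \<ge> 1" using n2 nm by simp
      have lpos: "word_len U (Suc m) > 0" using C.struct[of "Suc m"] by simp
      let ?c = "card {b. b < length (U m) \<and> Suc b \<in> Pset (length (U m))} * word_len U m"
      have "measure \<mu> (M.Bad0 (ms n)) \<le> real ?c / real (word_len U (Suc m))"
        unfolding ms_def nm
        by (rule M.average_bound[OF lpos]) (rule C.window_bound[OF m1])
      also have "\<dots> \<le> 1 / sqrt (real (length (U m)))" by (rule C.ratio_bound[OF m1])
      also have "\<dots> \<le> 1 / sqrt (real (Suc n))"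
      proof -
        have "Suc n \<le> length (U m)" using C.NN_grow[OF m1] nm by linarith
        then have "sqrt (real (Suc n)) \<le> sqrt (real (length (U m)))" by simp
        moreover have "sqrt (real (Suc n)) > 0" by simp
        ultimately show ?thesis by (simp add: frac_le)
      qed
      also have "\<dots> = g n" unfolding g_def by (simp add: real_sqrt_inverse divide_inverse)
      finally show ?thesis .
    qed
    then show "\<forall>\<^sub>F n in sequentially. measure \<mu> (M.Bad0 (ms n)) \<le> g n"
      unfolding eventually_sequentially by blast
  qed
  show "\<forall>A \<in> sets \<mu>. (\<lambda>n. measure \<mu> (((shift ^^ word_len U n) ` A - A) \<union>
                                             (A - (shift ^^ word_len U n) ` A))) \<longlonglongrightarrow> 0"
  proof
    fix A assume A: "A \<in> sets \<mu>"
    have r: "M.rigid ms A" by (rule M.all_rigid[OF lim A])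
    have "(shift ^^ word_len U n) ` A = M.S (ms n) A" for n
      unfolding shift_pow M.S_def ms_def by (rule sh_image[OF M.subX[OF A]])
    then show "(\<lambda>n. measure \<mu> (((shift ^^ word_len U n) ` A - A) \<union>
                                  (A - (shift ^^ word_len U n) ` A))) \<longlonglongrightarrow> 0"
      using r unfolding M.rigid_def M.D_def by simp
  qed
qed

end
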